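(* Let $\ell\ge1$ and $V=\prod_{j=\ell,\dots,2,1}(c_1x^jy^jc_2)^2$. If $C$ is an accepting computation of $V$ and at some point during $C$ the queue contains two full $x$-blocks (respectively, two full $y$-blocks), then at some later point during $C$ the queue contains two full $y$-blocks (respectively, two full $x$-blocks).
   Context: Queue automaton: a configuration is written $Q\,\|\,x$ ($Q$ = queue contents, $x$ = remaining input); a step from $Q\,\|\,\sigma x$ ($\sigma$ a symbol) goes either to $Q\sigma\,\|\,x$ (push the input symbol) or, if $Q=\sigma Q'$, to $Q'\,\|\,x$ (the input symbol is matched against the leftmost queue symbol, which is popped; that queue symbol was pushed from an earlier input position and the two occurrences are said to be matched). An accepting computation of $w$ is a computation $\varepsilon\,\|\,w\vdash^*\varepsilon\,\|\,\varepsilon$ ($\varepsilon$ the empty string). Here $c_1,c_2,x,y$ are four distinct symbols and $V=v_\ell v_\ell v_{\ell-1}v_{\ell-1}\cdots v_1v_1$ with $v_j=c_1x^jy^jc_2$. Each displayed subword $x^j$ of $V$ is an $x$-block and each displayed $y^j$ a $y$-block. At a given point of a computation, the queue contains a full $x$-block (resp. $y$-block) if the entire block $x^j$ (resp. $y^j$) of $V$ has been pushed onto the queue, with none of its symbols matched when read, and none of its symbols has yet been popped. *)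

theory Defs
  imports Main
begin

datatype sym = C1 | C2 | X | Y

definition vfac :: "nat \<Rightarrow> sym list" where
  "vfac j = [C1] @ replicate j X @ replicate j Y @ [C2]"

definition Vword :: "nat \<Rightarrow> sym list" where
  "Vword l = concat (map (\<lambda>j. vfac j @ vfac j) (rev [1..<Suc l]))"

text \<open>Starting position (0-based) in Vword l of copy k (k = 0,1) of v_j.\<close>
definition vstart :: "nat \<Rightarrow> nat \<Rightarrow> nat \<Rightarrow> nat" where
  "vstart l j k = (\<Sum>j'\<in>{j<..l}. 2 * (2 * j' + 2)) + k * (2 * j + 2)"

definition xblocks :: "nat \<Rightarrow> nat set set" where
  "xblocks l = {{vstart l j k + 1 ..< vstart l j k + 1 + j} | j k. 1 \<le> j \<and> j \<le> l \<and> k < 2}"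

definition yblocks :: "nat \<Rightarrow> nat set set" where
  "yblocks l = {{vstart l j k + 1 + j ..< vstart l j k + 1 + 2 * j} | j k. 1 \<le> j \<and> j \<le> l \<and> k < 2}"

text \<open>Configurations: (queue, number of input symbols consumed).  The queue is
  recorded as the list of input positions whose symbols were pushed (leftmost
  = front); its symbol contents are map ((!) w) Q.\<close>
type_synonym config = "nat list \<times> nat"

definition qstep :: "'a list \<Rightarrow> config \<Rightarrow> config \<Rightarrow> bool" where
  "qstep w c c' \<longleftrightarrow> (case c of (Q, i) \<Rightarrow>
      i < length w \<and> snd c' = Suc i \<and>
      (fst c' = Q @ [i] \<or> (Q \<noteq> [] \<and> w ! hd Q = w ! i \<and> fst c' = tl Q)))"

definition accepting :: "'a list \<Rightarrow> config list \<Rightarrow> bool" where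
  "accepting w cs \<longleftrightarrow> cs \<noteq> [] \<and> hd cs = ([], 0) \<and> last cs = ([], length w) \<and>
     (\<forall>t. Suc t < length cs \<longrightarrow> qstep w (cs ! t) (cs ! Suc t))"

definition two_full :: "nat set set \<Rightarrow> config \<Rightarrow> bool" where
  "two_full Bs c \<longleftrightarrow> (\<exists>B1\<in>Bs. \<exists>B2\<in>Bs. B1 \<noteq> B2 \<and> B1 \<subseteq> set (fst c) \<and> B2 \<subseteq> set (fst c))"

end

theory Submission
  imports Defs
begin


lemma len_vfac[simp]: "length (vfac j) = 2*j+2"
  by (simp add: vfac_def)

lemma vfac_nth: "q < 2*j+2 \<Longrightarrow> vfac j ! q = (if q = 0 then C1 else if q \<le> j then X else if q \<le> 2*j then Y else C2)"
  unfolding vfac_def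
  by (auto simp: nth_append nth_Cons' nth_replicate)

lemma Vword_Suc: "Vword (Suc l) = vfac (Suc l) @ vfac (Suc l) @ Vword l"
  by (simp add: Vword_def)

lemma Vword_0: "Vword 0 = []" by (simp add: Vword_def)

lemma vstart_top: "vstart (Suc l) (Suc l) k = k * (2 * Suc l + 2)"
  by (simp add: vstart_def)

lemma vstart_Suc: "j \<le> l \<Longrightarrow> vstart (Suc l) j k = vstart l j k + 2 * (2 * Suc l + 2)"
proof -
  assume "j \<le> l"
  then have "{j<..Suc l} = insert (Suc l) {j<..l}" by auto
  then show ?thesis by (simp add: vstart_def)
qed

lemma Vword_decomp: "p < length (Vword l) \<Longrightarrow> \<exists>j k q. 1 \<le> j \<and> j \<le> l \<and> k < 2 \<and> q < 2*j+2 \<and> p = vstart l j k + q \<and> Vword l ! p = vfac j ! q"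
proof (induction l arbitrary: p)
  case 0 then show ?case by (simp add: Vword_0)
next
  case (Suc l)
  show ?case
  proof (cases "p < 2 * Suc l + 2")
    case True
    then show ?thesis using vstart_top[of l 0]
      by (intro exI[of _ "Suc l"] exI[of _ 0] exI[of _ p]) (simp add: Vword_Suc nth_append)
  next
    case F1: False
    show ?thesis
    proof (cases "p < 2 * (2 * Suc l + 2)")
      case True
      define q where "q = p - (2 * Suc l + 2)"
      have pq: "p = length (vfac (Suc l)) + q" using F1 by (simp add: q_def)
      have v: "vstart (Suc l) (Suc l) 1 = 2 * Suc l + 2" using vstart_top[of l 1] by simp
      have qlt: "q < length (vfac (Suc l))" using True F1 by (simp add: q_def)
      have "Vword (Suc l) ! p = vfac (Suc l) ! q" unfolding pq Vword_Suc
        using qlt by (simp add: nth_append del: len_vfac)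
      moreover have "p = vstart (Suc l) (Suc l) 1 + q" using v F1 unfolding q_def by linarith
      moreover have "q < 2*Suc l + 2" using True F1 unfolding q_def by simp
      ultimately show ?thesis apply - apply (rule exI[where x="Suc l"], rule exI[where x=1], rule exI[where x=q]) by simp
    next
      case False
      define p' where "p' = p - 2 * (2 * Suc l + 2)"
      have "p' < length (Vword l)" using Suc.prems False by (simp add: Vword_Suc p'_def)
      from Suc.IH[OF this] obtain j k q where h: "1 \<le> j" "j \<le> l" "k < 2" "q < 2*j+2" "p' = vstart l j k + q" "Vword l ! p' = vfac j ! q" by blast
      have pp: "p = length (vfac (Suc l)) + (length (vfac (Suc l)) + p')" using False by (simp add: p'_def)
      have "Vword (Suc l) ! p = Vword l ! p'" unfolding pp Vword_Suc by (simp only: nth_append_length_plus)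
      moreover have "p = vstart (Suc l) j k + q" using h(5) vstart_Suc[OF h(2), of k] False by (simp add: p'_def)
      ultimately show ?thesis using h
        apply - apply (rule exI[of _ j], rule exI[of _ k], rule exI[of _ q]) by simp
    qed
  qed
qed

lemma Vword_nth: "1 \<le> j \<Longrightarrow> j \<le> l \<Longrightarrow> k < 2 \<Longrightarrow> q < 2*j+2 \<Longrightarrow>
   vstart l j k + q < length (Vword l) \<and> Vword l ! (vstart l j k + q) = vfac j ! q"
proof (induction l)
  case 0 then show ?case by simp
next
  case (Suc l)
  show ?case
  proof (cases "j = Suc l")
    case True
    have k: "k = 0 \<or> k = 1" using Suc.prems by auto
    then show ?thesis
    proof
      assume "k = 0" then show ?thesis using Suc.prems True vstart_top[of l k]
        by (auto simp: Vword_Suc nth_append)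
    next
      assume k1: "k = 1"
      have e: "vstart (Suc l) j k + q = length (vfac (Suc l)) + q" using vstart_top[of l k] k1 True by simp
      show ?thesis unfolding e Vword_Suc using Suc.prems True
        by (simp only: nth_append_length_plus) (simp add: nth_append)
    qed
  next
    case False
    then have "j \<le> l" using Suc.prems by simp
    from Suc.IH[OF Suc.prems(1) this Suc.prems(3,4)] vstart_Suc[OF this, of k]
    show ?thesis by (simp add: Vword_Suc nth_append)
  qed
qed

definition rank :: "nat \<Rightarrow> nat \<Rightarrow> nat \<Rightarrow> nat" where "rank l j k = 2*(l-j)+k"

lemma vstart_order:
  assumes "1 \<le> j" "j \<le> l" "k < 2" "1 \<le> j'" "j' \<le> l" "k' < 2" "rank l j k < rank l j' k'"
  shows "vstart l j k + 2*j+2 \<le> vstart l j' k'"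
proof (cases "j' = j")
  case True
  then have "k = 0" "k' = 1" using assms by (auto simp: rank_def)
  then show ?thesis using True by (simp add: vstart_def)
next
  case False
  then have "j' < j" using assms by (auto simp: rank_def)
  let ?f = "\<lambda>j'. 2 * (2 * j' + 2)"
  have "insert j {j<..l} \<subseteq> {j'<..l}" using \<open>j' < j\<close> assms by auto
  then have "sum ?f (insert j {j<..l}) \<le> sum ?f {j'<..l}" by (intro sum_mono2) auto
  then have "?f j + sum ?f {j<..l} \<le> sum ?f {j'<..l}" by simp
  moreover have "k*(2*j+2) \<le> 2*j+2" using assms(3) by (cases k) auto
  ultimately show ?thesis unfolding vstart_def by simp
qed




locale comp =
  fixes w :: "'a list" and cs :: "config list"
  assumes acc: "accepting w cs"
begin

abbreviation "n \<equiv> length w"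
definition Q :: "nat \<Rightarrow> nat list" where "Q i = fst (cs ! i)"

lemma snd_cs: "i < length cs \<Longrightarrow> snd (cs ! i) = i"
proof (induction i)
  case 0 then show ?case using acc by (simp add: accepting_def hd_conv_nth)
next
  case (Suc i)
  then have "qstep w (cs ! i) (cs ! Suc i)" using acc by (simp add: accepting_def)
  then show ?case using Suc by (auto simp: qstep_def split: prod.splits)
qed

lemma len_cs: "length cs = Suc n"
proof -
  have ne: "cs \<noteq> []" using acc by (simp add: accepting_def)
  have "snd (last cs) = length cs - 1" using snd_cs[of "length cs - 1"] ne by (simp add: last_conv_nth)
  moreover have "snd (last cs) = n" using acc by (simp add: accepting_def)
  ultimately show ?thesis using ne by (cases cs) auto
qed

lemma cs_eq: "i \<le> n \<Longrightarrow> cs ! i = (Q i, i)"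
  using snd_cs[of i] len_cs by (simp add: Q_def prod_eq_iff)

lemma Q0: "Q 0 = []"
proof -
  have "cs \<noteq> []" "hd cs = ([], 0)" using acc by (auto simp: accepting_def)
  then show ?thesis by (simp add: hd_conv_nth Q_def)
qed
lemma Qn: "Q n = []"
proof -
  have "cs \<noteq> []" "last cs = ([], n)" using acc by (auto simp: accepting_def)
  then show ?thesis using len_cs by (simp add: last_conv_nth Q_def)
qed

lemma step: "i < n \<Longrightarrow> Q (Suc i) = Q i @ [i] \<or> (Q i \<noteq> [] \<and> w ! hd (Q i) = w ! i \<and> Q (Suc i) = tl (Q i))"
proof -
  assume i: "i < n"
  then have "qstep w (cs ! i) (cs ! Suc i)" using acc len_cs by (simp add: accepting_def)
  then show ?thesis using cs_eq[of i] cs_eq[of "Suc i"] i by (simp add: qstep_def)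
qed

lemma inv: "i \<le> n \<Longrightarrow> sorted_wrt (<) (Q i) \<and> (\<forall>x\<in>set (Q i). x < i)"
proof (induction i)
  case 0 then show ?case by (simp add: Q0)
next
  case (Suc i)
  then have IH: "sorted_wrt (<) (Q i)" "\<forall>x\<in>set (Q i). x < i" by auto
  have "i < n" using Suc.prems by simp
  from step[OF this] show ?case
  proof
    assume "Q (Suc i) = Q i @ [i]" then show ?thesis using IH by (auto simp: sorted_wrt_append)
  next
    assume "Q i \<noteq> [] \<and> w ! hd (Q i) = w ! i \<and> Q (Suc i) = tl (Q i)"
    then show ?thesis using IH by (cases "Q i") auto
  qed
qed

lemma hd_min: "i \<le> n \<Longrightarrow> x \<in> set (Q i) \<Longrightarrow> hd (Q i) \<le> x"
  using inv[of i] by (cases "Q i") auto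

lemma persist_not: "s \<le> s' \<Longrightarrow> p \<notin> set (Q s) \<Longrightarrow> p < s \<Longrightarrow> s' \<le> n \<Longrightarrow> p \<notin> set (Q s')"
proof (induction s' rule: dec_induct)
  case base then show ?case by simp
next
  case (step m)
  from step(2) step.prems have "m < n" by simp
  from this[THEN comp.step[OF comp_axioms]] show ?case
  proof
    assume "Q (Suc m) = Q m @ [m]" then show ?thesis using step by auto
  next
    assume "Q m \<noteq> [] \<and> w ! hd (Q m) = w ! m \<and> Q (Suc m) = tl (Q m)"
    then show ?thesis using step by (cases "Q m") auto
  qed
qed

lemma persist: "p \<in> set (Q s) \<Longrightarrow> s \<le> n \<Longrightarrow> p < s' \<Longrightarrow> s' \<le> s \<Longrightarrow> p \<in> set (Q s')"
  using persist_not by blast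

lemma pop_ex_aux: "p \<in> set (Q t) \<Longrightarrow> t + d \<le> n \<Longrightarrow> p \<notin> set (Q (t + d)) \<Longrightarrow>
  \<exists>m. t \<le> m \<and> m < n \<and> Q m \<noteq> [] \<and> hd (Q m) = p \<and> Q (Suc m) = tl (Q m) \<and> w ! m = w ! p"
proof (induction d arbitrary: t)
  case 0 then show ?case by simp
next
  case (Suc d)
  show ?case
  proof (cases "p \<in> set (Q (Suc t))")
    case True
    from Suc.IH[OF True] Suc.prems show ?thesis by (auto intro: Suc_leD)
  next
    case False
    have "t < n" using Suc.prems by simp
    from step[OF this] show ?thesis
    proof
      assume "Q (Suc t) = Q t @ [t]" then show ?thesis using False Suc.prems by auto
    next
      assume h: "Q t \<noteq> [] \<and> w ! hd (Q t) = w ! t \<and> Q (Suc t) = tl (Q t)"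
      then have "hd (Q t) = p" using False Suc.prems(1) by (cases "Q t") auto
      then show ?thesis using h \<open>t < n\<close> by (intro exI[of _ t]) auto
    qed
  qed
qed

lemma pop_ex: "p \<in> set (Q t) \<Longrightarrow> t \<le> n \<Longrightarrow>
  \<exists>m. t \<le> m \<and> m < n \<and> Q m \<noteq> [] \<and> hd (Q m) = p \<and> Q (Suc m) = tl (Q m) \<and> w ! m = w ! p"
  using pop_ex_aux[of p t "n - t"] Qn by simp

definition pop :: "nat \<Rightarrow> nat \<Rightarrow> nat" where
  "pop t p = (SOME m. t \<le> m \<and> m < n \<and> Q m \<noteq> [] \<and> hd (Q m) = p \<and> Q (Suc m) = tl (Q m) \<and> w ! m = w ! p)"

lemma pop: assumes "p \<in> set (Q t)" "t \<le> n"
  shows "t \<le> pop t p" "pop t p < n" "Q (pop t p) \<noteq> []" "hd (Q (pop t p)) = p" "w ! pop t p = w ! p"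
    "p \<in> set (Q (pop t p))"
proof -
  have "t \<le> pop t p \<and> pop t p < n \<and> Q (pop t p) \<noteq> [] \<and> hd (Q (pop t p)) = p \<and> Q (Suc (pop t p)) = tl (Q (pop t p)) \<and> w ! pop t p = w ! p"
    unfolding pop_def by (rule someI_ex[OF pop_ex[OF assms]])
  then show "t \<le> pop t p" "pop t p < n" "Q (pop t p) \<noteq> []" "hd (Q (pop t p)) = p" "w ! pop t p = w ! p"
    "p \<in> set (Q (pop t p))" by (auto dest: hd_in_set[of "Q (pop t p)"])
qed

lemma lt_t: "p \<in> set (Q t) \<Longrightarrow> t \<le> n \<Longrightarrow> p < t" using inv by blast

lemma pop_mono: assumes "p \<in> set (Q t)" "q \<in> set (Q t)" "t \<le> n" "p < q"
  shows "pop t p < pop t q"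
proof (rule ccontr)
  assume "\<not> ?thesis"
  then have le: "pop t q \<le> pop t p" by simp
  have "p \<in> set (Q (pop t q))"
    using persist[OF pop(6)[OF assms(1,3)]] pop[OF assms(1,3)] pop[OF assms(2,3)] le lt_t[OF assms(1,3)]
    by (meson le_trans less_imp_le_nat order_less_le_trans)
  then have "q \<le> p" using hd_min[of "pop t q" p] pop[OF assms(2,3)] by (simp add: less_imp_le_nat)
  then show False using assms(4) by simp
qed

lemma pop_interval: assumes "\<forall>i. a \<le> i \<and> i \<le> e \<longrightarrow> i \<in> set (Q t)" "t \<le> n" "a + d \<le> e"
  shows "pop t a + d \<le> pop t (a + d)"
  using assms(3)
proof (induction d)
  case 0 then show ?case by simp
next
  case (Suc d)
  have "pop t (a + d) < pop t (a + Suc d)"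
    using pop_mono[of "a+d" t "a + Suc d"] assms Suc.prems by simp
  then show ?case using Suc by simp
qed

lemma push_between:
  assumes I: "\<forall>i. p \<le> i \<and> i \<le> q \<longrightarrow> i \<in> set (Q t) \<and> w ! i = \<sigma>" and "p \<le> q" "t \<le> n"
    and r: "pop t p < r" "r < pop t q" "w ! r \<noteq> \<sigma>"
  shows "r \<in> set (Q (Suc r))"
proof -
  have pQ: "p \<in> set (Q t)" and qQ: "q \<in> set (Q t)" using I \<open>p \<le> q\<close> by auto
  have rn: "r < n" using r pop(2)[OF qQ \<open>t\<le>n\<close>] by simp
  from step[OF rn] show ?thesis
  proof
    assume "Q (Suc r) = Q r @ [r]" then show ?thesis by simp
  next
    assume h: "Q r \<noteq> [] \<and> w ! hd (Q r) = w ! r \<and> Q (Suc r) = tl (Q r)"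
    define hh where "hh = hd (Q r)"
    have hin: "hh \<in> set (Q r)" using h by (simp add: hh_def)
    have qt: "q < t" using lt_t[OF qQ \<open>t\<le>n\<close>] .
    have "q \<in> set (Q r)"
      using persist[OF pop(6)[OF qQ \<open>t\<le>n\<close>], of r] pop[OF qQ \<open>t\<le>n\<close>] pop[OF pQ \<open>t\<le>n\<close>] r qt by simp
    then have hq: "hh \<le> q" using hd_min[of r q] rn by (simp add: hh_def)
    have hp: "p \<le> hh"
    proof (rule ccontr)
      assume "\<not> p \<le> hh"
      then have "hh < p" by simp
      moreover have "p < pop t p" using lt_t[OF pQ \<open>t\<le>n\<close>] pop(1)[OF pQ \<open>t\<le>n\<close>] by simp
      ultimately have "hh \<in> set (Q (pop t p))" using persist[OF hin, of "pop t p"] rn r by simp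
      then have "p \<le> hh" using hd_min[of "pop t p" hh] pop[OF pQ \<open>t\<le>n\<close>] by simp
      then show False using \<open>hh < p\<close> by simp
    qed
    have "w ! hh = \<sigma>" using I hp hq by simp
    then show ?thesis using h r(3) by (simp add: hh_def)
  qed
qed

lemma stay:
  assumes "r \<in> set (Q (Suc r))" "p < r" "p \<in> set (Q s)" "r < s" "s \<le> n"
  shows "r \<in> set (Q s)"
proof -
  have "\<forall>s'. Suc r \<le> s' \<longrightarrow> s' \<le> s \<longrightarrow> r \<in> set (Q s')"
  proof (intro allI impI)
    fix s' assume "Suc r \<le> s'" "s' \<le> s"
    then show "r \<in> set (Q s')"
    proof (induction s' rule: dec_induct)
      case base then show ?case using assms(1) by simp
    next
      case (step m)
      have mn: "m < n" using step assms by simp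
      have pm: "p \<in> set (Q m)" using persist[OF assms(3) assms(5), of m] step assms by simp
      have rm: "r \<in> set (Q m)" using step by simp
      from comp.step[OF comp_axioms mn] show ?case
      proof
        assume "Q (Suc m) = Q m @ [m]" then show ?thesis using rm by simp
      next
        assume h: "Q m \<noteq> [] \<and> w ! hd (Q m) = w ! m \<and> Q (Suc m) = tl (Q m)"
        have "hd (Q m) \<le> p" using hd_min[OF _ pm] mn by simp
        then show ?thesis using h rm assms(2) by (cases "Q m") auto
      qed
    qed
  qed
  then show ?thesis using assms by simp
qed

end



definition valid :: "nat \<Rightarrow> nat \<Rightarrow> nat \<Rightarrow> bool" where "valid l j k \<longleftrightarrow> 1 \<le> j \<and> j \<le> l \<and> k < 2"
definition blk :: "nat \<Rightarrow> nat \<Rightarrow> nat \<Rightarrow> nat \<Rightarrow> nat set" where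
  "blk l j k c = {vstart l j k + 1 + c*j ..< vstart l j k + 1 + c*j + j}"
definition sy :: "nat \<Rightarrow> sym" where "sy c = (if c = 0 then X else Y)"
definition blks :: "nat \<Rightarrow> nat \<Rightarrow> nat set set" where "blks l c = {blk l j k c | j k. valid l j k}"

lemma xblocks_eq: "xblocks l = blks l 0"
  unfolding xblocks_def blks_def blk_def valid_def by simp
lemma yblocks_eq: "yblocks l = blks l 1"
  unfolding yblocks_def blks_def blk_def valid_def by (simp add: mult_2 add.assoc)

lemma sym_range: assumes "q < 2*j+2" "c \<le> 1" shows "(vfac j ! q = sy c) \<longleftrightarrow> (1 + c*j \<le> q \<and> q \<le> c*j + j)"
proof -
  have "c = 0 \<or> c = 1" using assms by auto
  then show ?thesis
  proof
    assume c: "c = 0" show ?thesis using assms(1) unfolding c by (simp add: vfac_nth sy_def)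
  next
    assume c: "c = 1" show ?thesis using assms(1) unfolding c by (simp add: vfac_nth sy_def)
  qed
qed

lemma sy_ne: "c \<le> 1 \<Longrightarrow> sy (1 - c) \<noteq> sy c" by (cases "c = 0") (auto simp: sy_def)

lemma blk_sym: assumes "valid l j k" "c \<le> 1" "r \<in> blk l j k c"
  shows "r < length (Vword l) \<and> Vword l ! r = sy c"
proof -
  define q where "q = r - vstart l j k"
  have r: "r = vstart l j k + q" "1 + c*j \<le> q" "q \<le> c*j + j" using assms(3) by (auto simp: blk_def q_def)
  have "c*j \<le> j" using assms(2) by (cases "c = 0") auto
  then have q: "q < 2*j+2" using r by linarith
  show ?thesis using Vword_nth[of j l k q] assms q r sym_range[OF q assms(2)] by (simp add: valid_def)
qed

lemma rank_inj: assumes "valid l j k" "valid l j' k'" "rank l j k = rank l j' k'" shows "j = j' \<and> k = k'"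
proof -
  have k: "k < 2" "k' < 2" "j \<le> l" "j' \<le> l" using assms(1,2) by (auto simp: valid_def)
  have e: "2*(l-j)+k = 2*(l-j')+k'" using assms(3) by (simp add: rank_def)
  then have "(2*(l-j)+k) mod 2 = (2*(l-j')+k') mod 2" by simp
  then have "k mod 2 = k' mod 2" by simp
  then have kk: "k = k'" using k by simp
  then have "l - j = l - j'" using assms(3) by (simp add: rank_def)
  then have "j = j'" using k by linarith
  then show ?thesis using kk by simp
qed

lemma fac_le: assumes "valid l j k" "valid l j' k'" "q' < 2*j'+2" "vstart l j k + q \<le> vstart l j' k' + q'"
  shows "rank l j k \<le> rank l j' k'"
proof (rule ccontr)
  assume "\<not> ?thesis"
  then have "vstart l j' k' + 2*j'+2 \<le> vstart l j k" using vstart_order[of j' l k' j k] assms by (simp add: valid_def)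
  then show False using assms by simp
qed

lemma decomp_sy: assumes "m < length (Vword l)" "Vword l ! m = sy c" "c \<le> 1"
  shows "\<exists>j k q. valid l j k \<and> q < 2*j+2 \<and> m = vstart l j k + q \<and> 1 + c*j \<le> q \<and> q \<le> c*j + j"
proof -
  obtain j k q where h: "1 \<le> j" "j \<le> l" "k < 2" "q < 2*j+2" "m = vstart l j k + q" "Vword l ! m = vfac j ! q"
    using Vword_decomp[OF assms(1)] by blast
  then show ?thesis using sym_range[OF h(4) assms(3)] assms(2) unfolding valid_def by metis
qed

lemma between:
  assumes "valid l j1 k1" "valid l j2 k2" "q1 < 2*j1+2" "q2 < 2*j2+2" "c \<le> 1"
    "1 + c*j1 \<le> q1" "q1 \<le> c*j1+j1" "1 + c*j2 \<le> q2" "q2 \<le> c*j2+j2"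
    "vstart l j1 k1 + q1 \<le> vstart l j2 k2 + q2"
  shows "(j1 = j2 \<and> k1 = k2) \<or> (\<exists>j k. valid l j k \<and> blk l j k (1-c) \<subseteq> {vstart l j1 k1 + q1<..<vstart l j2 k2 + q2})"
proof (cases "rank l j1 k1 = rank l j2 k2")
  case True then show ?thesis using rank_inj assms by blast
next
  case False
  then have "rank l j1 k1 < rank l j2 k2" using fac_le[OF assms(1,2,4,10)] by simp
  then have o: "vstart l j1 k1 + 2*j1+2 \<le> vstart l j2 k2" using vstart_order[of j1 l k1 j2 k2] assms by (simp add: valid_def)
  show ?thesis
  proof (cases "c = 0")
    case True
    have "blk l j1 k1 (1-c) \<subseteq> {vstart l j1 k1 + q1<..<vstart l j2 k2 + q2}"
      using True o assms by (auto simp: blk_def)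
    then show ?thesis using assms(1) by blast
  next
    case False
    then have c: "c = 1" using assms by simp
    have "blk l j2 k2 (1-c) \<subseteq> {vstart l j1 k1 + q1<..<vstart l j2 k2 + q2}"
      using c o assms by (auto simp: blk_def)
    then show ?thesis using assms(2) by blast
  qed
qed

lemma after:
  assumes "valid l j' k'" "valid l j0 k0" "q0 < 2*j0+2" "c \<le> 1" "1 + c*j0 \<le> q0" "q0 \<le> c*j0 + j0"
    "vstart l j' k' + (c*j' + j') < vstart l j0 k0 + q0"
  shows "rank l j' k' < rank l j0 k0"
proof -
  have cj: "c*j' \<le> j'" using assms(4) by (cases "c = 0") auto
  then have cj: "c*j' + j' < 2*j'+2" by linarith
  have "rank l j' k' \<le> rank l j0 k0" using fac_le[OF assms(1,2,3), of "c*j'+j'"] assms(7) by simp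
  moreover have "rank l j' k' \<noteq> rank l j0 k0"
  proof
    assume "rank l j' k' = rank l j0 k0"
    then have "j' = j0" "k' = k0" using rank_inj assms(1,2) by blast+
    then show False using assms(6,7) by simp
  qed
  ultimately show ?thesis by simp
qed




lemma main:
  assumes acc: "accepting (Vword l) cs" and tl: "t < length cs" and c: "c \<le> 1"
    and v1: "valid l j k" and v2: "valid l j' k'" and rk: "rank l j k < rank l j' k'"
    and s1: "blk l j k c \<subseteq> set (fst (cs ! t))" and s2: "blk l j' k' c \<subseteq> set (fst (cs ! t))"
  shows "\<exists>t'. t < t' \<and> t' < length cs \<and> (\<exists>Y1\<in>blks l (1-c). \<exists>Y2\<in>blks l (1-c). Y1 \<noteq> Y2 \<and>
           Y1 \<subseteq> set (fst (cs ! t')) \<and> Y2 \<subseteq> set (fst (cs ! t')))"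
proof -
  interpret comp "Vword l" cs using acc by unfold_locales
  let ?w = "Vword l"
  have tn: "t \<le> n" using tl len_cs by simp
  have Qt: "set (Q t) = set (fst (cs ! t))" by (simp add: Q_def)
  define a where "a = vstart l j k + 1 + c*j"
  define e where "e = vstart l j k + c*j + j"
  define a2 where "a2 = vstart l j' k' + 1 + c*j'"
  define e2 where "e2 = vstart l j' k' + c*j' + j'"
  have j1: "1 \<le> j" "1 \<le> j'" using v1 v2 by (auto simp: valid_def)
  have jj: "j' \<le> j" using rk v1 v2 by (auto simp: rank_def valid_def)
  have I1: "\<forall>i. a \<le> i \<and> i \<le> e \<longrightarrow> i \<in> set (Q t) \<and> ?w ! i = sy c"
  proof (intro allI impI)
    fix i assume "a \<le> i \<and> i \<le> e"
    then have "i \<in> blk l j k c" using j1 by (auto simp: blk_def a_def e_def)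
    then show "i \<in> set (Q t) \<and> ?w ! i = sy c" using s1 Qt blk_sym[OF v1 c] by auto
  qed
  have I2: "\<forall>i. a2 \<le> i \<and> i \<le> e2 \<longrightarrow> i \<in> set (Q t) \<and> ?w ! i = sy c"
  proof (intro allI impI)
    fix i assume "a2 \<le> i \<and> i \<le> e2"
    then have "i \<in> blk l j' k' c" using j1 by (auto simp: blk_def a2_def e2_def)
    then show "i \<in> set (Q t) \<and> ?w ! i = sy c" using s2 Qt blk_sym[OF v2 c] by auto
  qed
  have ae: "a \<le> e" "a2 \<le> e2" using j1 by (auto simp: a_def e_def a2_def e2_def)
  have cj: "c*j \<le> j" "c*j' \<le> j'" using c by (cases "c = 0"; auto)+
  have ord: "vstart l j k + 2*j+2 \<le> vstart l j' k'" using vstart_order[of j l k j' k'] v1 v2 rk by (simp add: valid_def)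
  have ea2: "e < a2" using ord cj unfolding e_def a2_def by linarith
  have aQ: "a \<in> set (Q t)" "e \<in> set (Q t)" "a2 \<in> set (Q t)" "e2 \<in> set (Q t)" using I1 I2 ae by auto
  define m1 where "m1 = pop t a"
  define m2 where "m2 = pop t e"
  define m3 where "m3 = pop t a2"
  define m4 where "m4 = pop t e2"
  have e2t: "e2 < t" using lt_t[OF aQ(4) tn] .
  have tm1: "t \<le> m1" using pop(1)[OF aQ(1) tn] by (simp add: m1_def)
  have m12: "m1 + (e - a) \<le> m2" using pop_interval[of a e t "e - a"] I1 tn ae by (simp add: m1_def m2_def)
  have m34: "m3 + (e2 - a2) \<le> m4" using pop_interval[of a2 e2 t "e2 - a2"] I2 tn ae by (simp add: m3_def m4_def)
  have m23: "m2 < m3" using pop_mono[OF aQ(2) aQ(3) tn ea2] by (simp add: m2_def m3_def)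
  have m4n: "m4 < n" using pop(2)[OF aQ(4) tn] by (simp add: m4_def)
  have sym: "?w ! m1 = sy c" "?w ! m2 = sy c" "?w ! m3 = sy c" "?w ! m4 = sy c"
    using pop(5)[OF aQ(1) tn] pop(5)[OF aQ(2) tn] pop(5)[OF aQ(3) tn] pop(5)[OF aQ(4) tn] I1 I2 ae
    by (auto simp: m1_def m2_def m3_def m4_def)
  have mn: "m1 < n" "m2 < n" "m3 < n" using m12 m23 m34 m4n by auto
  obtain p1 r1 q1 where d1: "valid l p1 r1" "q1 < 2*p1+2" "m1 = vstart l p1 r1 + q1" "1 + c*p1 \<le> q1" "q1 \<le> c*p1+p1"
    using decomp_sy[OF mn(1) sym(1) c] by blast
  obtain p2 r2 q2 where d2: "valid l p2 r2" "q2 < 2*p2+2" "m2 = vstart l p2 r2 + q2" "1 + c*p2 \<le> q2" "q2 \<le> c*p2+p2"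
    using decomp_sy[OF mn(2) sym(2) c] by blast
  obtain p3 r3 q3 where d3: "valid l p3 r3" "q3 < 2*p3+2" "m3 = vstart l p3 r3 + q3" "1 + c*p3 \<le> q3" "q3 \<le> c*p3+p3"
    using decomp_sy[OF mn(3) sym(3) c] by blast
  obtain p4 r4 q4 where d4: "valid l p4 r4" "q4 < 2*p4+2" "m4 = vstart l p4 r4 + q4" "1 + c*p4 \<le> q4" "q4 \<le> c*p4+p4"
    using decomp_sy[OF m4n sym(4) c] by blast
  have af1: "rank l j' k' < rank l p1 r1"
    using after[OF v2 d1(1,2) c d1(4,5)] d1(3) e2t tm1 by (simp add: e2_def)
  have af3: "rank l j' k' < rank l p3 r3"
    using after[OF v2 d3(1,2) c d3(4,5)] d3(3) e2t tm1 m12 m23 by (simp add: e2_def)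
  have ne12: "\<not> (p1 = p2 \<and> r1 = r2)"
  proof
    assume h: "p1 = p2 \<and> r1 = r2"
    then have "m2 - m1 = q2 - q1" using d1 d2 by simp
    then have "j \<le> p1" using m12 d1 d2 h by (simp add: a_def e_def)
    then show False using af1 rk v1 v2 d1(1) jj by (auto simp: rank_def valid_def)
  qed
  have ne34: "\<not> (p3 = p4 \<and> r3 = r4)"
  proof
    assume h: "p3 = p4 \<and> r3 = r4"
    then have "j' \<le> p3" using m34 d3 d4 by (simp add: a2_def e2_def)
    then have h3: "rank l p3 r3 = Suc (rank l j' k')" using af3 v2 d3(1) by (auto simp: rank_def valid_def)
    have "rank l p1 r1 \<le> rank l p3 r3" using fac_le[OF d1(1) d3(1) d3(2), of q1] d1(3) d3(3) m12 m23 by simp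
    then have "rank l p1 r1 = rank l p3 r3" using af1 h3 by simp
    then have e13: "p1 = p3 \<and> r1 = r3" using rank_inj d1(1) d3(1) by blast
    have "rank l p1 r1 \<le> rank l p2 r2" using fac_le[OF d1(1) d2(1) d2(2), of q1] d1(3) d2(3) m12 by simp
    moreover have "rank l p2 r2 \<le> rank l p3 r3" using fac_le[OF d2(1) d3(1) d3(2), of q2] d2(3) d3(3) m23 by simp
    ultimately have "rank l p1 r1 = rank l p2 r2" using e13 by simp
    then show False using rank_inj d1(1) d2(1) ne12 by blast
  qed
  obtain ja ka where Ya: "valid l ja ka" "blk l ja ka (1-c) \<subseteq> {m1<..<m2}"
    using between[OF d1(1) d2(1) d1(2) d2(2) c d1(4,5) d2(4,5)] d1(3) d2(3) m12 ne12 by auto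
  obtain jb kb where Yb: "valid l jb kb" "blk l jb kb (1-c) \<subseteq> {m3<..<m4}"
    using between[OF d3(1) d4(1) d3(2) d4(2) c d3(4,5) d4(4,5)] d3(3) d4(3) m34 ne34 by auto
  have c': "1 - c \<le> 1" by simp
  have e2Q: "e2 \<in> set (Q m4)" using pop(6)[OF aQ(4) tn] by (simp add: m4_def)
  have inA: "blk l ja ka (1-c) \<subseteq> set (Q m4)"
  proof
    fix r assume r: "r \<in> blk l ja ka (1-c)"
    have "?w ! r = sy (1-c)" using blk_sym[OF Ya(1) c' r] by simp
    then have "?w ! r \<noteq> sy c" using sy_ne[OF c] by simp
    then have "r \<in> set (Q (Suc r))"
      using push_between[OF I1 ae(1) tn] r Ya(2) by (auto simp: m1_def m2_def)
    moreover have "m1 < r" "r < m2" using r Ya(2) by auto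
    ultimately show "r \<in> set (Q m4)" using stay[of r e2 m4] e2Q e2t tm1 m12 m23 m34 m4n by linarith
  qed
  have inB: "blk l jb kb (1-c) \<subseteq> set (Q m4)"
  proof
    fix r assume r: "r \<in> blk l jb kb (1-c)"
    have "?w ! r = sy (1-c)" using blk_sym[OF Yb(1) c' r] by simp
    then have "?w ! r \<noteq> sy c" using sy_ne[OF c] by simp
    then have "r \<in> set (Q (Suc r))"
      using push_between[OF I2 ae(2) tn] r Yb(2) by (auto simp: m3_def m4_def)
    moreover have "m3 < r" "r < m4" using r Yb(2) by auto
    ultimately show "r \<in> set (Q m4)" using stay[of r e2 m4] e2Q e2t tm1 m12 m23 m34 m4n by linarith
  qed
  have neAB: "blk l ja ka (1-c) \<noteq> blk l jb kb (1-c)"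
  proof
    assume eq: "blk l ja ka (1-c) = blk l jb kb (1-c)"
    have "vstart l ja ka + 1 + (1-c)*ja \<in> blk l ja ka (1-c)" using Ya(1) by (simp add: blk_def valid_def)
    then have x: "vstart l ja ka + 1 + (1-c)*ja \<in> blk l jb kb (1-c)" using eq by simp
    have "vstart l ja ka + 1 + (1-c)*ja < m2" using \<open>_ \<in> blk l ja ka (1-c)\<close> Ya(2) by auto
    moreover have "m3 < vstart l ja ka + 1 + (1-c)*ja" using x Yb(2) by auto
    ultimately show False using m23 by simp
  qed
  have A: "blk l ja ka (1-c) \<in> blks l (1-c)" "blk l jb kb (1-c) \<in> blks l (1-c)"
    using Ya(1) Yb(1) unfolding blks_def by blast+
  have "m4 \<le> n" using m4n by simp
  then have F: "set (Q m4) = set (fst (cs ! m4))" by (simp add: Q_def)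
  have tm4: "t < m4" "m4 < length cs" using tm1 m12 m23 m34 m4n len_cs by auto
  have "blk l ja ka (1-c) \<subseteq> set (fst (cs ! m4))" "blk l jb kb (1-c) \<subseteq> set (fst (cs ! m4))"
    using inA inB F by simp_all
  then show ?thesis using A neAB tm4 by blast
qed


lemma dir:
  assumes acc: "accepting (Vword l) cs" and tl: "t < length cs" and c: "c \<le> 1"
    and tf: "two_full (blks l c) (cs ! t)"
  shows "\<exists>t'. t < t' \<and> t' < length cs \<and> two_full (blks l (1-c)) (cs ! t')"
proof -
  obtain B1 B2 where B: "B1 \<in> blks l c" "B2 \<in> blks l c" "B1 \<noteq> B2" "B1 \<subseteq> set (fst (cs ! t))" "B2 \<subseteq> set (fst (cs ! t))"
    using tf unfolding two_full_def by blast
  obtain j k where 1: "valid l j k" "B1 = blk l j k c" using B(1) unfolding blks_def by blast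
  obtain j' k' where 2: "valid l j' k'" "B2 = blk l j' k' c" using B(2) unfolding blks_def by blast
  have s1: "blk l j k c \<subseteq> set (fst (cs ! t))" using B(4) 1(2) by simp
  have s2: "blk l j' k' c \<subseteq> set (fst (cs ! t))" using B(5) 2(2) by simp
  have "rank l j k \<noteq> rank l j' k'" using rank_inj[OF 1(1) 2(1)] 1 2 B(3) by auto
  then consider "rank l j k < rank l j' k'" | "rank l j' k' < rank l j k" by linarith
  then have "\<exists>t'. t < t' \<and> t' < length cs \<and> (\<exists>Y1\<in>blks l (1-c). \<exists>Y2\<in>blks l (1-c). Y1 \<noteq> Y2 \<and>
           Y1 \<subseteq> set (fst (cs ! t')) \<and> Y2 \<subseteq> set (fst (cs ! t')))"
  proof cases
    case 1
    then show ?thesis by (rule main[OF acc tl c \<open>valid l j k\<close> \<open>valid l j' k'\<close> _ s1 s2])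
  next
    case 2
    then show ?thesis by (rule main[OF acc tl c \<open>valid l j' k'\<close> \<open>valid l j k\<close> _ s2 s1])
  qed
  then obtain t' Y1 Y2 where "t < t'" "t' < length cs" "Y1 \<in> blks l (1-c)" "Y2 \<in> blks l (1-c)" "Y1 \<noteq> Y2"
    "Y1 \<subseteq> set (fst (cs ! t'))" "Y2 \<subseteq> set (fst (cs ! t'))" by blast
  then show ?thesis unfolding two_full_def by blast
qed

theorem lemma12:
  fixes l :: nat and cs :: "config list" and t :: nat
  assumes "l \<ge> 1"
    and "accepting (Vword l) cs"
    and "t < length cs"
  shows "(two_full (xblocks l) (cs ! t) \<longrightarrow>
            (\<exists>t'. t < t' \<and> t' < length cs \<and> two_full (yblocks l) (cs ! t'))) \<and>
         (two_full (yblocks l) (cs ! t) \<longrightarrow>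
            (\<exists>t'. t < t' \<and> t' < length cs \<and> two_full (xblocks l) (cs ! t')))"
proof -
  have a: "two_full (blks l 0) (cs ! t) \<Longrightarrow> \<exists>t'. t < t' \<and> t' < length cs \<and> two_full (blks l 1) (cs ! t')"
    using dir[OF assms(2,3), of 0] by simp
  have b: "two_full (blks l 1) (cs ! t) \<Longrightarrow> \<exists>t'. t < t' \<and> t' < length cs \<and> two_full (blks l 0) (cs ! t')"
    using dir[OF assms(2,3), of 1] by simp
  show ?thesis unfolding xblocks_eq yblocks_eq using a b by blast
qed

end
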